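(* Let $I$ be a set, $\mathcal{E}=(E_i)_{i\in I}$ a family of nonempty sets, and $R$ a multiple relation in $\mathcal{E}$. Then the set $\mathcal{K}_R$ of subsets of $J_R$ that are not scindable for $R$ is an integral connective structure on $J_R$.
   Context: For $J\subseteq I$ let $Z_J=\prod_{j\in J}E_j$ ($J$-families; $Z_\emptyset=\{\bullet\}$). A multiple relation is a pair $R=(J_R,G_R)$ with $J_R\subseteq I$ and $G_R\subseteq Z_{J_R}$. For $K\subseteq J_R$, $R_{|K}=(K,\{x_{|K}:x\in G_R\})$. Product: $R\bowtie S=(J_R\cup J_S,\{x\in Z_{J_R\cup J_S}: x_{|J_R}\in G_R,\ x_{|J_S}\in G_S\})$. A bipartition of $J$ is a pair $(K,L)$ of nonempty disjoint subsets with union $J$. A relation $T$ is scindable if for some bipartition $(K,L)$ of $J_T$ there are relations $R,S$ with domains $K,L$ and $T=R\bowtie S$; a subset $J\subseteq J_R$ is scindable for $R$ if $R_{|J}$ is scindable. A connective structure on $X$ is a set $\mathcal{K}$ of subsets of $X$ such that for every $\mathcal{I}\subseteq\mathcal{K}$ with $\bigcap_{K\in\mathcal{I}}K\neq\emptyset$, $\bigcup_{K\in\mathcal{I}}K\in\mathcal{K}$; it is integral if it contains all singletons. *)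

theory Defs
  imports "HOL-Library.FuncSet"
begin

text \<open>J-families: Z_J = product of E_j over j in J, as extensional functions
  (Z_{} is the singleton containing the everywhere-undefined function).\<close>
definition families :: "('i \<Rightarrow> 'e set) \<Rightarrow> 'i set \<Rightarrow> ('i \<Rightarrow> 'e) set" where
  "families E J = PiE J E"

type_synonym ('i, 'e) mrel = "'i set \<times> ('i \<Rightarrow> 'e) set"

definition is_mrel :: "'i set \<Rightarrow> ('i \<Rightarrow> 'e set) \<Rightarrow> ('i, 'e) mrel \<Rightarrow> bool" where
  "is_mrel I E R \<longleftrightarrow> fst R \<subseteq> I \<and> snd R \<subseteq> families E (fst R)"

definition mrestrict :: "('i, 'e) mrel \<Rightarrow> 'i set \<Rightarrow> ('i, 'e) mrel" where
  "mrestrict R K = (K, (\<lambda>x. restrict x K) ` snd R)"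

definition mprod :: "('i \<Rightarrow> 'e set) \<Rightarrow> ('i, 'e) mrel \<Rightarrow> ('i, 'e) mrel \<Rightarrow> ('i, 'e) mrel" where
  "mprod E R S = (fst R \<union> fst S,
     {x \<in> families E (fst R \<union> fst S). restrict x (fst R) \<in> snd R \<and> restrict x (fst S) \<in> snd S})"

definition bipartition :: "'i set \<Rightarrow> 'i set \<Rightarrow> 'i set \<Rightarrow> bool" where
  "bipartition J K L \<longleftrightarrow> K \<noteq> {} \<and> L \<noteq> {} \<and> K \<inter> L = {} \<and> K \<union> L = J"

definition scindable :: "'i set \<Rightarrow> ('i \<Rightarrow> 'e set) \<Rightarrow> ('i, 'e) mrel \<Rightarrow> bool" where
  "scindable I E T \<longleftrightarrow> (\<exists>K L R S. bipartition (fst T) K L \<and>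
      is_mrel I E R \<and> is_mrel I E S \<and> fst R = K \<and> fst S = L \<and> T = mprod E R S)"

definition scindable_subset :: "'i set \<Rightarrow> ('i \<Rightarrow> 'e set) \<Rightarrow> ('i, 'e) mrel \<Rightarrow> 'i set \<Rightarrow> bool" where
  "scindable_subset I E R J \<longleftrightarrow> scindable I E (mrestrict R J)"

definition connective_structure :: "'a set \<Rightarrow> 'a set set \<Rightarrow> bool" where
  "connective_structure X \<K> \<longleftrightarrow> \<K> \<subseteq> Pow X \<and>
     (\<forall>\<I>. \<I> \<subseteq> \<K> \<and> \<Inter>\<I> \<noteq> {} \<longrightarrow> \<Union>\<I> \<in> \<K>)"

definition integral_connective_structure :: "'a set \<Rightarrow> 'a set set \<Rightarrow> bool" where
  "integral_connective_structure X \<K> \<longleftrightarrow> connective_structure X \<K> \<and> (\<forall>x\<in>X. {x} \<in> \<K>)"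

end

theory Submission
  imports Defs
begin

lemma key:
  assumes R: "is_mrel I E R" and U: "U \<subseteq> fst R"
    and eq: "mrestrict R U = mprod E A B" and bp: "bipartition U K L"
    and fA: "fst A = K" and fB: "fst B = L"
    and J: "J \<subseteq> U" and JK: "J \<inter> K \<noteq> {}" and JL: "J \<inter> L \<noteq> {}"
  shows "scindable I E (mrestrict R J)"
proof -
  have G: "snd R \<subseteq> PiE (fst R) E" using R by (simp add: is_mrel_def families_def)
  have KL: "K \<inter> L = {}" "K \<union> L = U" using bp by (auto simp: bipartition_def)
  have GT: "(\<lambda>x. restrict x U) ` snd R = {x \<in> PiE U E. restrict x K \<in> snd A \<and> restrict x L \<in> snd B}"
    using eq fA fB KL by (simp add: mrestrict_def mprod_def families_def)
  define A' where "A' = mrestrict R (J \<inter> K)"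
  define B' where "B' = mrestrict R (J \<inter> L)"
  have mA: "is_mrel I E A'" using R U J KL G unfolding A'_def is_mrel_def mrestrict_def families_def
    by (auto simp: PiE_def Pi_def extensional_def) blast+
  have mB: "is_mrel I E B'" using R U J KL G unfolding B'_def is_mrel_def mrestrict_def families_def
    by (auto simp: PiE_def Pi_def extensional_def) blast+
  have JKL: "(J \<inter> K) \<union> (J \<inter> L) = J" using J KL by auto
  have "mrestrict R J = mprod E A' B'"
  proof -
    have "(\<lambda>x. restrict x J) ` snd R =
      {y \<in> PiE J E. restrict y (J \<inter> K) \<in> (\<lambda>x. restrict x (J \<inter> K)) ` snd R
          \<and> restrict y (J \<inter> L) \<in> (\<lambda>x. restrict x (J \<inter> L)) ` snd R}" (is "?l = ?r")
    proof
      show "?l \<subseteq> ?r"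
      proof
        fix y assume "y \<in> ?l"
        then obtain x where x: "x \<in> snd R" "y = restrict x J" by auto
        have "x \<in> PiE (fst R) E" using x G by auto
        hence "y \<in> PiE J E" using x J U by (auto simp: PiE_def Pi_def)
        moreover have "restrict y (J \<inter> K) = restrict x (J \<inter> K)" "restrict y (J \<inter> L) = restrict x (J \<inter> L)"
          using x by (auto simp: restrict_def)
        ultimately show "y \<in> ?r" using x by auto
      qed
    next
      show "?r \<subseteq> ?l"
      proof
        fix y assume y: "y \<in> ?r"
        then obtain x1 x2 where x: "x1 \<in> snd R" "x2 \<in> snd R"
          "restrict y (J \<inter> K) = restrict x1 (J \<inter> K)" "restrict y (J \<inter> L) = restrict x2 (J \<inter> L)"
          and yP: "y \<in> PiE J E" by auto
        define t1 where "t1 = restrict x1 U"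
        define t2 where "t2 = restrict x2 U"
        have t1: "t1 \<in> PiE U E" "restrict t1 K \<in> snd A" using GT x(1) unfolding t1_def by blast+
        have t2: "t2 \<in> PiE U E" "restrict t2 L \<in> snd B" using GT x(2) unfolding t2_def by blast+
        define z where "z = (\<lambda>i. if i \<in> K then t1 i else if i \<in> L then t2 i else undefined)"
        have "z \<in> PiE U E" using t1 t2 KL unfolding z_def by (auto simp: PiE_def Pi_def extensional_def)
        moreover have "restrict z K = restrict t1 K" unfolding z_def by (auto simp: restrict_def)
        moreover have "restrict z L = restrict t2 L" using KL unfolding z_def by (auto simp: restrict_def fun_eq_iff)
        ultimately have "z \<in> (\<lambda>x. restrict x U) ` snd R" using GT t1 t2 by auto
        then obtain x where xx: "x \<in> snd R" "z = restrict x U" by auto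
        have "restrict x J = y"
        proof
          fix i show "restrict x J i = y i"
          proof (cases "i \<in> J")
            case True
            have zi: "z i = x i" using xx True J by auto
            show ?thesis
            proof (cases "i \<in> K")
              case True
              have "y i = x1 i" using fun_cong[OF x(3), of i] True \<open>i \<in> J\<close> by auto
              thus ?thesis using zi True \<open>i \<in> J\<close> J unfolding z_def t1_def by auto
            next
              case False
              hence iL: "i \<in> L" using KL \<open>i \<in> J\<close> J by auto
              have "y i = x2 i" using fun_cong[OF x(4), of i] iL \<open>i \<in> J\<close> by auto
              thus ?thesis using zi False iL \<open>i \<in> J\<close> J unfolding z_def t2_def by auto
            qed
          next
            case False thus ?thesis using yP by (auto simp: PiE_def extensional_def)
          qed
        qed
        thus "y \<in> ?l" using xx by auto
      qed
    qed
    thus ?thesis unfolding mprod_def A'_def B'_def mrestrict_def families_def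
      using JKL by (auto simp: restrict_restrict Int_absorb1)
  qed
  moreover have "bipartition (fst (mrestrict R J)) (J \<inter> K) (J \<inter> L)"
    using JK JL JKL KL by (auto simp: bipartition_def mrestrict_def)
  ultimately show ?thesis unfolding scindable_def using mA mB
    by (metis A'_def B'_def fst_conv mrestrict_def)
qed

lemma restr_restr: "J \<subseteq> U \<Longrightarrow> mrestrict (mrestrict R U) J = mrestrict R J"
  proof -
  assume "J \<subseteq> U"
  hence "U \<inter> J = J" by blast
  thus ?thesis by (simp add: mrestrict_def image_image)
qed

theorem mainTheorem2:
  fixes I :: "'i set" and E :: "'i \<Rightarrow> 'e set" and R :: "('i, 'e) mrel"
  assumes "\<forall>i\<in>I. E i \<noteq> {}"
    and "is_mrel I E R"
  shows "integral_connective_structure (fst R)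
           {J. J \<subseteq> fst R \<and> \<not> scindable_subset I E R J}"
  unfolding integral_connective_structure_def connective_structure_def
proof (intro conjI allI impI ballI)
  show "{J. J \<subseteq> fst R \<and> \<not> scindable_subset I E R J} \<subseteq> Pow (fst R)" by auto
next
  fix x assume "x \<in> fst R"
  moreover have "\<not> scindable_subset I E R {x}"
  proof
    assume "scindable_subset I E R {x}"
    then obtain K L where "K \<noteq> {}" "L \<noteq> {}" "K \<inter> L = {}" "K \<union> L = {x}"
      unfolding scindable_subset_def scindable_def bipartition_def mrestrict_def by auto
    thus False by (metis Int_absorb1 Un_upper1 Un_upper2 subset_singletonD)
  qed
  ultimately show "{x} \<in> {J. J \<subseteq> fst R \<and> \<not> scindable_subset I E R J}" by auto
next
  fix \<I> assume h: "\<I> \<subseteq> {J. J \<subseteq> fst R \<and> \<not> scindable_subset I E R J} \<and> \<Inter> \<I> \<noteq> {}"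
  then obtain a where a: "\<And>J. J \<in> \<I> \<Longrightarrow> a \<in> J" by auto
  let ?U = "\<Union>\<I>"
  have U: "?U \<subseteq> fst R" using h by auto
  have "\<not> scindable_subset I E R ?U"
  proof
    assume "scindable_subset I E R ?U"
    then obtain K L A B where bp: "bipartition ?U K L" and fA: "fst A = K" and fB: "fst B = L"
      and eq: "mrestrict R ?U = mprod E A B"
      unfolding scindable_subset_def scindable_def by (auto simp: mrestrict_def)
    have KL: "K \<noteq> {}" "L \<noteq> {}" "K \<inter> L = {}" "K \<union> L = ?U" using bp by (auto simp: bipartition_def)
    have "\<exists>J\<in>\<I>. J \<inter> K \<noteq> {} \<and> J \<inter> L \<noteq> {}"
    proof (cases "a \<in> K")
      case True
      obtain b where "b \<in> L" using KL by auto
      then obtain J where "J \<in> \<I>" "b \<in> J" using KL by auto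
      thus ?thesis using a True \<open>b \<in> L\<close> by blast
    next
      case False
      obtain b where "b \<in> K" using KL by auto
      then obtain J where J: "J \<in> \<I>" "b \<in> J" using KL by auto
      hence "a \<in> ?U" using a by auto
      hence "a \<in> L" using False KL by auto
      thus ?thesis using a J \<open>b \<in> K\<close> by blast
    qed
    then obtain J where J: "J \<in> \<I>" "J \<inter> K \<noteq> {}" "J \<inter> L \<noteq> {}" by blast
    have "scindable I E (mrestrict R J)"
      using key[OF assms(2) U eq bp fA fB _ J(2,3)] J(1) by auto
    thus False using h J(1) unfolding scindable_subset_def by auto
  qed
  thus "?U \<in> {J. J \<subseteq> fst R \<and> \<not> scindable_subset I E R J}" using U by auto
qed

end
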